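(* Under the isomorphism $\iota$ of Lemma 3.1, the image of $\mathcal C^+(\mathrm{II}_{2,10})$ is $M_4(\mathcal C^+(-\mathbb O(\mathbb Z)))$.
   Context: Clifford algebras: for a real quadratic space $(W,q)$, $(a,b)=q(a+b)-q(a)-q(b)$, $\mathcal C(W)$ is generated by $W$ with $ab+ba=(a,b)$, $\mathcal C^+(W)$ its even part; for a lattice $L\subset W$, $\mathcal C^+(L)$ is the subring generated by all products $ab$, $a,b\in L$. $V=\mathbb R^{12}$ with basis $h_1,\dots,h_4,e_0,\dots,e_7$, $(h_1,h_2)=(h_3,h_4)=1$, other pairings among the $h_i$ zero, $(h_i,e_k)=0$, $(e_k,e_l)=-2\delta_{kl}$, $q(x)=(x,x)/2$. $V_0=\sum\mathbb Re_k$ is identified with the octaves $\mathbb O=\mathbb R^8$ (standard basis $e_0,\dots,e_7$) with quadratic form $-N$, $N(x)=\sum x_k^2$. Integral octaves $\mathbb O(\mathbb Z)=\sum\mathbb Zf_i$ with $f_0=e_0,f_1=e_1,f_2=e_2,f_3=e_3$, $f_4=\frac12(e_1+e_2+e_3-e_4)$, $f_5=\frac12(-e_0-e_1-e_4+e_5)$, $f_6=\frac12(-e_0+e_1-e_2+e_6)$, $f_7=\frac12(-e_0+e_2+e_4+e_7)$; $-\mathbb O(\mathbb Z)$ denotes this lattice in $V_0$. $\mathrm{II}_{2,10}=\mathbb Zh_1+\mathbb Zh_2+\mathbb Zh_3+\mathbb Zh_4+\mathbb O(\mathbb Z)\subset V$. $\iota:\mathcal C(V)\to M_4(\mathcal C(V_0))$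 is the algebra isomorphism with $\iota(h_1)=e_0(E_{12}+E_{43})$, $\iota(h_2)=e_0(-E_{21}-E_{34})$, $\iota(h_3)=e_0(E_{14}-E_{23})$, $\iota(h_4)=e_0(E_{32}-E_{41})$, $\iota(e_0)=e_0\mathrm{diag}(-1,1,-1,1)$, $\iota(e_i)=e_iE_4$ ($1\le i\le7$), $E_{kl}$ the matrix units. *)

theory Defs
  imports Complex_Main
begin

text \<open>Since the basis e_0..e_7 is orthogonal with (e_k,e_k) = -2, i.e. e_k^2 = q(e_k) = -1,
 C(V_0) has the standard basis e_S (S a subset of {0..7}, e_S = ordered product of the e_k, k in S).
 An element is represented by its coefficient function on subsets of {0,...,7}
 (values on other sets are irrelevant and kept 0 by the operations).\<close>

type_synonym cl = "nat set \<Rightarrow> real"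

definition idx8 :: "nat set" where "idx8 = {..<8}"

text \<open>e_S e_T = (-1)^(#{(s,t) in S x T. t < s} + |S \<inter> T|) e_{S \<triangle> T}\<close>
definition csign :: "nat set \<Rightarrow> nat set \<Rightarrow> real" where
  "csign S T = (-1) ^ (card {(s,t). s \<in> S \<and> t \<in> T \<and> t < s} + card (S \<inter> T))"

definition cmul :: "cl \<Rightarrow> cl \<Rightarrow> cl" where
  "cmul x y = (\<lambda>U. \<Sum>S\<in>Pow idx8. \<Sum>T\<in>Pow idx8.
      if (S - T) \<union> (T - S) = U then csign S T * x S * y T else 0)"

definition cadd :: "cl \<Rightarrow> cl \<Rightarrow> cl" where "cadd x y = (\<lambda>S. x S + y S)"
definition cneg :: "cl \<Rightarrow> cl" where "cneg x = (\<lambda>S. - x S)"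
definition czero :: cl where "czero = (\<lambda>S. 0)"
definition cone :: cl where "cone = (\<lambda>S. if S = {} then 1 else 0)"
definition cscale :: "real \<Rightarrow> cl \<Rightarrow> cl" where "cscale c x = (\<lambda>S. c * x S)"

text \<open>Embedding of V_0 into C(V_0): y (coordinates w.r.t. e_0..e_7) maps to sum y_k e_k.\<close>
definition cvec :: "(nat \<Rightarrow> real) \<Rightarrow> cl" where
  "cvec y = (\<lambda>S. if S \<subseteq> idx8 \<and> card S = 1 then y (the_elem S) else 0)"

definition ce0 :: cl where "ce0 = cvec (\<lambda>k. if k = 0 then 1 else 0)"

inductive_set ring_gen :: "('a \<Rightarrow> 'a \<Rightarrow> 'a) \<Rightarrow> ('a \<Rightarrow> 'a \<Rightarrow> 'a) \<Rightarrow> ('a \<Rightarrow> 'a)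
    \<Rightarrow> 'a \<Rightarrow> 'a set \<Rightarrow> 'a set"
  for mul add neg one G where
  gen: "x \<in> G \<Longrightarrow> x \<in> ring_gen mul add neg one G"
| one: "one \<in> ring_gen mul add neg one G"
| add: "x \<in> ring_gen mul add neg one G \<Longrightarrow> y \<in> ring_gen mul add neg one G
          \<Longrightarrow> add x y \<in> ring_gen mul add neg one G"
| neg: "x \<in> ring_gen mul add neg one G \<Longrightarrow> neg x \<in> ring_gen mul add neg one G"
| mul: "x \<in> ring_gen mul add neg one G \<Longrightarrow> y \<in> ring_gen mul add neg one G
          \<Longrightarrow> mul x y \<in> ring_gen mul add neg one G"

text \<open>Basis f_0..f_7 of O(Z), as coordinate vectors w.r.t. e_0..e_7.\<close>
definition octf :: "nat \<Rightarrow> nat \<Rightarrow> real" where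
  "octf i = (if i = 0 then (\<lambda>k. if k = 0 then 1 else 0)
     else if i = 1 then (\<lambda>k. if k = 1 then 1 else 0)
     else if i = 2 then (\<lambda>k. if k = 2 then 1 else 0)
     else if i = 3 then (\<lambda>k. if k = 3 then 1 else 0)
     else if i = 4 then (\<lambda>k. if k \<in> {1,2,3} then 1/2 else if k = 4 then -1/2 else 0)
     else if i = 5 then (\<lambda>k. if k \<in> {0,1,4} then -1/2 else if k = 5 then 1/2 else 0)
     else if i = 6 then (\<lambda>k. if k \<in> {0,2} then -1/2 else if k \<in> {1,6} then 1/2 else 0)
     else if i = 7 then (\<lambda>k. if k = 0 then -1/2 else if k \<in> {2,4,7} then 1/2 else 0)
     else (\<lambda>k. 0))"

text \<open>-O(Z) in V_0 (coordinates on indices \<ge> 8 are normalised to 0).\<close>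
definition octZ :: "(nat \<Rightarrow> real) set" where
  "octZ = {y. \<exists>n :: nat \<Rightarrow> int. y = (\<lambda>k. \<Sum>i<8. of_int (n i) * octf i k)}"

definition Cplus_octZ :: "cl set" where
  "Cplus_octZ = ring_gen cmul cadd cneg cone {cmul (cvec a) (cvec b) | a b. a \<in> octZ \<and> b \<in> octZ}"

type_synonym mat = "nat \<Rightarrow> nat \<Rightarrow> cl"

definition idx4 :: "nat set" where "idx4 = {1..4}"

definition mmul :: "mat \<Rightarrow> mat \<Rightarrow> mat" where
  "mmul A B = (\<lambda>i j. if i \<in> idx4 \<and> j \<in> idx4
     then foldr cadd (map (\<lambda>k. cmul (A i k) (B k j)) [1,2,3,4]) czero else czero)"
definition madd :: "mat \<Rightarrow> mat \<Rightarrow> mat" where "madd A B = (\<lambda>i j. cadd (A i j) (B i j))"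
definition mneg :: "mat \<Rightarrow> mat" where "mneg A = (\<lambda>i j. cneg (A i j))"
definition mone :: mat where
  "mone = (\<lambda>i j. if i \<in> idx4 \<and> i = j then cone else czero)"

definition M4 :: "cl set \<Rightarrow> mat set" where
  "M4 S = {A. \<forall>i j. if i \<in> idx4 \<and> j \<in> idx4 then A i j \<in> S else A i j = czero}"

text \<open>Coefficient (of e_0) in entry (r,c) of iota(h_i):
  iota(h1) = e0(E12+E43), iota(h2) = e0(-E21-E34), iota(h3) = e0(E14-E23), iota(h4) = e0(E32-E41).\<close>
definition hcoef :: "nat \<Rightarrow> nat \<Rightarrow> nat \<Rightarrow> real" where
  "hcoef i r c =
    (if i = 1 then (if (r,c) = (1,2) \<or> (r,c) = (4,3) then 1 else 0)
     else if i = 2 then (if (r,c) = (2,1) \<or> (r,c) = (3,4) then -1 else 0)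
     else if i = 3 then (if (r,c) = (1,4) then 1 else if (r,c) = (2,3) then -1 else 0)
     else if i = 4 then (if (r,c) = (3,2) then 1 else if (r,c) = (4,1) then -1 else 0)
     else 0)"

text \<open>iota(e0) = e0 diag(-1,1,-1,1).\<close>
definition dcoef :: "nat \<Rightarrow> nat \<Rightarrow> real" where
  "dcoef r c = (if r = c then (if odd r then -1 else 1) else 0)"

text \<open>iota on a vector x_1 h_1 + ... + x_4 h_4 + sum_k y_k e_k of V, with
  iota(e_i) = e_i E_4 (E_4 the identity matrix) for 1 \<le> i \<le> 7; extended linearly.\<close>
definition iotaV :: "(nat \<Rightarrow> real) \<Rightarrow> (nat \<Rightarrow> real) \<Rightarrow> mat" where
  "iotaV x y = (\<lambda>r c. if r \<in> idx4 \<and> c \<in> idx4 then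
      cadd (cscale ((\<Sum>i\<in>idx4. x i * hcoef i r c) + y 0 * dcoef r c) ce0)
           (if r = c then cvec (y(0 := 0)) else czero)
    else czero)"

text \<open>II_{2,10} = Z h1 + ... + Z h4 + O(Z), as pairs (h-coordinates, octave coordinates).\<close>
definition II210 :: "((nat \<Rightarrow> real) \<times> (nat \<Rightarrow> real)) set" where
  "II210 = {(\<lambda>i. of_int (n i), y) | n y. y \<in> octZ}"

text \<open>iota(C^+(II_{2,10})): since iota is a ring isomorphism, it is the subring of M_4(C(V_0))
  generated by the products iota(a) iota(b), a, b in II_{2,10}.\<close>
definition iota_Cplus_II :: "mat set" where
  "iota_Cplus_II = ring_gen mmul madd mneg mone
     {mmul (iotaV (fst a) (snd a)) (iotaV (fst b) (snd b)) | a b. a \<in> II210 \<and> b \<in> II210}"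

end

theory Submission
  imports Defs
begin


lemma fin8[simp]: "finite idx8" by (simp add: idx8_def)

definition supp :: "cl \<Rightarrow> bool" where "supp z \<longleftrightarrow> (\<forall>U. \<not> U \<subseteq> idx8 \<longrightarrow> z U = 0)"

lemma csign_empty_l[simp]: "csign {} T = 1" by (simp add: csign_def)
lemma csign_empty_r[simp]: "csign S {} = 1" by (simp add: csign_def)
lemma aux00: "{(s, t). s = (0::nat) \<and> t = 0 \<and> t < s} = {}" by auto

lemma supp_cmul: "supp (cmul x y)"
  unfolding supp_def cmul_def by (auto intro!: sum.neutral)

lemma cmul_cone_left: assumes "supp z" shows "cmul cone z = z"
proof (rule ext)
  fix U
  have "cmul cone z U = (\<Sum>S\<in>Pow idx8. if S = {} then (\<Sum>T\<in>Pow idx8. if T = U then z T else 0) else 0)"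
    unfolding cmul_def cone_def
  proof (rule sum.cong)
    fix S assume "S \<in> Pow idx8"
    show "(\<Sum>T\<in>Pow idx8. if S - T \<union> (T - S) = U then csign S T * (if S = {} then 1 else 0) * z T else 0)
       = (if S = {} then (\<Sum>T\<in>Pow idx8. if T = U then z T else 0) else 0)"
      by (cases "S = {}") (simp_all cong: if_cong add: sum.neutral)
  qed simp
  also have "\<dots> = (\<Sum>T\<in>Pow idx8. if T = U then z T else 0)" by (simp add: sum.delta)
  also have "\<dots> = z U" using assms by (auto simp: supp_def sum.delta')
  finally show "cmul cone z U = z U" .
qed

lemma cmul_cone_right: assumes "supp z" shows "cmul z cone = z"
proof (rule ext)
  fix U
  have "cmul z cone U = (\<Sum>S\<in>Pow idx8. if S = U then z S else 0)"
    unfolding cmul_def cone_def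
  proof (rule sum.cong)
    fix S assume "S \<in> Pow idx8"
    have "(\<Sum>T\<in>Pow idx8. if S - T \<union> (T - S) = U then csign S T * z S * (if T = {} then 1 else 0) else 0)
       = (\<Sum>T\<in>Pow idx8. if T = {} then (if S = U then z S else 0) else 0)"
      by (rule sum.cong) auto
    also have "\<dots> = (if S = U then z S else 0)" by (simp add: sum.delta)
    finally show "(\<Sum>T\<in>Pow idx8. if S - T \<union> (T - S) = U then csign S T * z S * (if T = {} then 1 else 0) else 0)
       = (if S = U then z S else 0)" .
  qed simp
  also have "\<dots> = z U" using assms by (auto simp: supp_def sum.delta')
  finally show "cmul z cone U = z U" .
qed

lemma cmul_czero_l[simp]: "cmul czero y = czero" by (simp add: cmul_def czero_def fun_eq_iff cong: if_cong)
lemma cmul_czero_r[simp]: "cmul y czero = czero" by (simp add: cmul_def czero_def fun_eq_iff cong: if_cong)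
lemma cadd_czero_l[simp]: "cadd czero y = y" by (simp add: cadd_def czero_def)
lemma cadd_czero_r[simp]: "cadd y czero = y" by (simp add: cadd_def czero_def)
lemma cneg_czero[simp]: "cneg czero = czero" by (simp add: cneg_def czero_def)

definition blade :: "nat set \<Rightarrow> real \<Rightarrow> cl" where "blade S0 a = (\<lambda>S. if S = S0 then a else 0)"

lemma cmul_blade: assumes "S0 \<subseteq> idx8" "T0 \<subseteq> idx8"
  shows "cmul (blade S0 a) (blade T0 b) = blade ((S0 - T0) \<union> (T0 - S0)) (csign S0 T0 * a * b)"
proof (rule ext)
  fix U
  have "cmul (blade S0 a) (blade T0 b) U = (\<Sum>S\<in>Pow idx8. if S = S0 then (\<Sum>T\<in>Pow idx8. if T = T0 then (if (S0 - T0) \<union> (T0 - S0) = U then csign S0 T0 * a * b else 0) else 0) else 0)"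
    unfolding cmul_def blade_def
  proof (rule sum.cong)
    fix S assume "S \<in> Pow idx8"
    show "(\<Sum>T\<in>Pow idx8. if S - T \<union> (T - S) = U then csign S T * (if S = S0 then a else 0) * (if T = T0 then b else 0) else 0)
       = (if S = S0 then (\<Sum>T\<in>Pow idx8. if T = T0 then (if (S0 - T0) \<union> (T0 - S0) = U then csign S0 T0 * a * b else 0) else 0) else 0)"
    proof (cases "S = S0")
      case True
      have "(\<Sum>T\<in>Pow idx8. if S0 - T \<union> (T - S0) = U then csign S0 T * a * (if T = T0 then b else 0) else 0)
        = (\<Sum>T\<in>Pow idx8. if T = T0 then (if (S0 - T0) \<union> (T0 - S0) = U then csign S0 T0 * a * b else 0) else 0)"
      proof (rule sum.cong)
        fix T show "(if S0 - T \<union> (T - S0) = U then csign S0 T * a * (if T = T0 then b else 0) else 0)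
          = (if T = T0 then (if (S0 - T0) \<union> (T0 - S0) = U then csign S0 T0 * a * b else 0) else 0)"
          by (cases "T = T0") simp_all
      qed simp
      then show ?thesis unfolding True by (simp only: simp_thms if_True)
    qed (simp cong: if_cong add: sum.neutral)
  qed simp
  also have "\<dots> = blade ((S0 - T0) \<union> (T0 - S0)) (csign S0 T0 * a * b) U"
    using assms by (simp add: sum.delta blade_def)
  finally show "cmul (blade S0 a) (blade T0 b) U = blade ((S0 - T0) \<union> (T0 - S0)) (csign S0 T0 * a * b) U" .
qed

lemma ce0_blade: "ce0 = blade {0} 1"
  unfolding ce0_def cvec_def blade_def
  by (auto simp: idx8_def card_Suc_eq fun_eq_iff)

lemma cone_blade: "cone = blade {} 1" by (simp add: cone_def blade_def fun_eq_iff)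

definition cs :: "real \<Rightarrow> cl" where "cs a = cscale a cone"
definition es :: "real \<Rightarrow> cl" where "es a = cscale a ce0"

lemma cs_blade: "cs a = blade {} a" by (simp add: cs_def cscale_def cone_blade blade_def fun_eq_iff)
lemma es_blade: "es a = blade {0} a" by (simp add: es_def cscale_def ce0_blade blade_def fun_eq_iff)

lemma csign00: "csign {0} {0} = -1" by (simp add: csign_def aux00)

lemma cmul_es: "cmul (es a) (es b) = cs (-(a*b))"
  by (simp add: es_blade cs_blade cmul_blade idx8_def csign00)
lemma cmul_cs: "cmul (cs a) (cs b) = cs (a*b)"
  by (simp add: cs_blade cmul_blade)
lemma cs1: "cs 1 = cone" by (simp add: cs_def cscale_def fun_eq_iff)
lemma cs0: "cs 0 = czero" by (simp add: cs_def cscale_def czero_def fun_eq_iff)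
lemma cadd_cs: "cadd (cs a) (cs b) = cs (a+b)" by (simp add: cs_def cscale_def cadd_def fun_eq_iff algebra_simps)
lemma cneg_cs: "cneg (cs a) = cs (-a)" by (simp add: cs_def cscale_def cneg_def fun_eq_iff)



lemma idx4_eq: "idx4 = {1,2,3,4}" by (auto simp: idx4_def)

definition single :: "nat \<Rightarrow> nat \<Rightarrow> cl \<Rightarrow> mat" where
  "single i j c = (\<lambda>r s. if r = i \<and> s = j then c else czero)"
definition smat :: "(nat \<Rightarrow> nat \<Rightarrow> real) \<Rightarrow> mat" where
  "smat f = (\<lambda>r c. if r \<in> idx4 \<and> c \<in> idx4 then cs (f r c) else czero)"
definition emat :: "(nat \<Rightarrow> nat \<Rightarrow> real) \<Rightarrow> mat" where
  "emat f = (\<lambda>r c. if r \<in> idx4 \<and> c \<in> idx4 then es (f r c) else czero)"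

lemma foldr4: "foldr cadd (map g [1,2,3,4]) czero = cadd (g 1) (cadd (g 2) (cadd (g 3) (g 4)))"
  by simp

lemma mmul_emat: "mmul (emat f) (emat g) = smat (\<lambda>r c. -(\<Sum>k\<in>idx4. f r k * g k c))"
  unfolding mmul_def emat_def smat_def foldr4
  by (rule ext, rule ext) (simp add: idx4_eq cmul_es cadd_cs algebra_simps)

lemma mmul_smat: "mmul (smat f) (smat g) = smat (\<lambda>r c. (\<Sum>k\<in>idx4. f r k * g k c))"
  unfolding mmul_def smat_def foldr4
  by (rule ext, rule ext) (simp add: idx4_eq cmul_cs cadd_cs algebra_simps)

lemma mneg_smat: "mneg (smat f) = smat (\<lambda>r c. - f r c)"
  unfolding mneg_def smat_def by (rule ext, rule ext) (simp add: cneg_cs)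

lemma smat_single: assumes "i \<in> idx4" "j \<in> idx4"
  "\<forall>r\<in>idx4. \<forall>c\<in>idx4. f r c = (if r = i \<and> c = j then 1 else 0)"
  shows "smat f = single i j cone"
  unfolding smat_def single_def using assms by (auto simp: fun_eq_iff cs1 cs0)

lemma cvec_zero: "cvec (\<lambda>k. 0) = czero" by (simp add: cvec_def czero_def fun_eq_iff)

lemma iotaV_e0: "iotaV x (\<lambda>k. if k = 0 then t else 0) = emat (\<lambda>r c. (\<Sum>i\<in>idx4. x i * hcoef i r c) + t * dcoef r c)"
proof -
  have eq: "(\<lambda>k. if k = 0 then t else 0)(0 := 0) = (\<lambda>k. 0)" by auto
  show ?thesis unfolding iotaV_def emat_def es_def eq cvec_zero
    by (simp add: fun_eq_iff)
qed

definition hvec :: "nat \<Rightarrow> nat \<Rightarrow> real" where "hvec a = (\<lambda>i. of_int (if i = a then 1 else 0))"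
definition yv :: "nat \<Rightarrow> nat \<Rightarrow> real" where "yv a = (\<lambda>k. if k = 0 then of_int (if a = 0 then 1 else 0) else 0)"
definition G :: "nat \<Rightarrow> nat \<Rightarrow> nat \<Rightarrow> real" where
  "G a = (\<lambda>r c. (\<Sum>i\<in>idx4. hvec a i * hcoef i r c) + yv a 0 * dcoef r c)"

definition gP where "gP a b = mmul (iotaV (hvec a) (yv a)) (iotaV (hvec b) (yv b))"

lemma gP_smat: "gP a b = smat (\<lambda>r c. -(\<Sum>k\<in>idx4. G a r k * G b k c))"
  unfolding gP_def yv_def iotaV_e0 mmul_emat G_def by simp

lemma G1: "G 1 = (\<lambda>r c. hcoef 1 r c)" by (simp add: G_def fun_eq_iff idx4_eq hvec_def yv_def)
lemma G2: "G 2 = (\<lambda>r c. hcoef 2 r c)" by (simp add: G_def fun_eq_iff idx4_eq hvec_def yv_def)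
lemma G3: "G 3 = (\<lambda>r c. hcoef 3 r c)" by (simp add: G_def fun_eq_iff idx4_eq hvec_def yv_def)
lemma G4: "G 4 = (\<lambda>r c. hcoef 4 r c)" by (simp add: G_def fun_eq_iff idx4_eq hvec_def yv_def)
lemma G0: "G 0 = dcoef" by (simp add: G_def fun_eq_iff idx4_eq hvec_def yv_def)

lemma E11_eq: "mmul (gP 1 2) (gP 3 4) = single 1 1 cone"
  unfolding gP_smat mmul_smat G1 G2 G3 G4
  by (rule smat_single) (simp_all add: idx4_eq hcoef_def)




lemma lt8: "{..<8::nat} = {0,1,2,3,4,5,6,7}" by auto

lemma e0vec_octZ: "(\<lambda>k. if k = 0 then of_int m else 0) \<in> octZ"
  unfolding octZ_def
  by (rule CollectI, rule exI[of _ "\<lambda>i. if i = 0 then m else 0"]) (simp add: fun_eq_iff lt8 octf_def)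

lemma octZ_add: assumes "y \<in> octZ" "z \<in> octZ" shows "(\<lambda>k. y k + z k) \<in> octZ"
proof -
  obtain n where n: "y = (\<lambda>k. \<Sum>i<8. of_int (n i) * octf i k)" using assms(1) by (auto simp: octZ_def)
  obtain n' where n': "z = (\<lambda>k. \<Sum>i<8. of_int (n' i) * octf i k)" using assms(2) by (auto simp: octZ_def)
  show ?thesis unfolding octZ_def
    by (rule CollectI, rule exI[of _ "\<lambda>i. n i + n' i"]) (simp add: n n' sum.distrib distrib_right)
qed

lemma octZ_2y0: assumes "y \<in> octZ" shows "2 * y 0 \<in> \<int>"
proof -
  obtain n where n: "y = (\<lambda>k. \<Sum>i<8. of_int (n i) * octf i k)" using assms(1) by (auto simp: octZ_def)
  have "2 * y 0 = of_int (2 * n 0 - n 5 - n 6 - n 7)" by (simp add: n lt8 octf_def algebra_simps)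
  then show ?thesis by simp
qed

lemma hcoef_Ints: "hcoef i r c \<in> \<int>" by (simp add: hcoef_def)
lemma hcoef_diag: "hcoef i r r = 0" by (simp add: hcoef_def)

lemma cscale_ce0: "cscale a ce0 = cvec (\<lambda>k. if k = 0 then a else 0)"
  by (auto simp: cscale_def ce0_def cvec_def fun_eq_iff)
lemma cadd_cvec: "cadd (cvec u) (cvec v) = cvec (\<lambda>k. u k + v k)"
  by (auto simp: cadd_def cvec_def fun_eq_iff)

lemma iotaV_entry: assumes "y \<in> octZ" "r \<in> idx4" "c \<in> idx4"
  shows "\<exists>w\<in>octZ. iotaV (\<lambda>i. of_int (n i)) y r c = cvec w"
proof (cases "r = c")
  case False
  let ?a = "\<Sum>i\<in>idx4. of_int (n i) * hcoef i r c"
  have "?a \<in> \<int>" by (intro Ints_sum Ints_mult hcoef_Ints) simp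
  then obtain m where m: "?a = of_int m" by (auto elim: Ints_cases)
  have "iotaV (\<lambda>i. of_int (n i)) y r c = cvec (\<lambda>k. if k = 0 then of_int m else 0)"
    using assms False m by (simp add: iotaV_def dcoef_def cscale_ce0)
  then show ?thesis using e0vec_octZ by blast
next
  case True
  have e: "iotaV (\<lambda>i. of_int (n i)) y r c = cvec (\<lambda>k. if k = 0 then y 0 * dcoef r r else y k)"
    using assms True by (simp add: iotaV_def hcoef_diag cscale_ce0 cadd_cvec) (simp add: fun_eq_iff cvec_def)
  show ?thesis
  proof (cases "odd r")
    case False
    have "(\<lambda>k. if k = 0 then y 0 * dcoef r r else y k) = y" using False by (auto simp: dcoef_def)
    then show ?thesis using e assms by auto
  next
    case o: True
    have "- (2 * y 0) \<in> \<int>" using octZ_2y0[OF assms(1)] by simp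
    then obtain m where m: "- (2 * y 0) = of_int m" by (rule Ints_cases) blast
    have "(\<lambda>k. if k = 0 then y 0 * dcoef r r else y k) = (\<lambda>k. y k + (\<lambda>k. if k = 0 then of_int m else 0) k)"
      using o m by (auto simp: dcoef_def fun_eq_iff) (simp add: algebra_simps)?
    moreover have "(\<lambda>k. y k + (\<lambda>k. if k = 0 then of_int m else 0) k) \<in> octZ"
      by (rule octZ_add[OF assms(1) e0vec_octZ])
    ultimately show ?thesis using e by auto
  qed
qed




abbreviation "RS \<equiv> Cplus_octZ"
abbreviation "RM \<equiv> iota_Cplus_II"

lemma S_one: "cone \<in> RS" unfolding Cplus_octZ_def by (rule ring_gen.one)
lemma S_add: "x \<in> RS \<Longrightarrow> y \<in> RS \<Longrightarrow> cadd x y \<in> RS" unfolding Cplus_octZ_def by (rule ring_gen.add)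
lemma S_neg: "x \<in> RS \<Longrightarrow> cneg x \<in> RS" unfolding Cplus_octZ_def by (rule ring_gen.neg)
lemma S_mul: "x \<in> RS \<Longrightarrow> y \<in> RS \<Longrightarrow> cmul x y \<in> RS" unfolding Cplus_octZ_def by (rule ring_gen.mul)
lemma S_gen: "a \<in> octZ \<Longrightarrow> b \<in> octZ \<Longrightarrow> cmul (cvec a) (cvec b) \<in> RS"
  unfolding Cplus_octZ_def by (rule ring_gen.gen) blast
lemma cadd_cneg: "cadd x (cneg x) = czero" by (simp add: cadd_def cneg_def czero_def)
lemma S_zero: "czero \<in> RS" using S_add[OF S_one S_neg[OF S_one]] by (simp add: cadd_cneg)

lemma R_one: "mone \<in> RM" unfolding iota_Cplus_II_def by (rule ring_gen.one)
lemma R_add: "x \<in> RM \<Longrightarrow> y \<in> RM \<Longrightarrow> madd x y \<in> RM" unfolding iota_Cplus_II_def by (rule ring_gen.add)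
lemma R_neg: "x \<in> RM \<Longrightarrow> mneg x \<in> RM" unfolding iota_Cplus_II_def by (rule ring_gen.neg)
lemma R_mul: "x \<in> RM \<Longrightarrow> y \<in> RM \<Longrightarrow> mmul x y \<in> RM" unfolding iota_Cplus_II_def by (rule ring_gen.mul)
lemma R_gen: "y \<in> octZ \<Longrightarrow> y' \<in> octZ \<Longrightarrow>
   mmul (iotaV (\<lambda>i. of_int (n i)) y) (iotaV (\<lambda>i. of_int (n' i)) y') \<in> RM"
  unfolding iota_Cplus_II_def II210_def by (rule ring_gen.gen) force

lemma M4_one: "mone \<in> M4 RS" by (auto simp: M4_def mone_def S_one S_zero)
lemma M4_add: "A \<in> M4 RS \<Longrightarrow> B \<in> M4 RS \<Longrightarrow> madd A B \<in> M4 RS"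
  unfolding M4_def madd_def by (auto simp: S_add split: if_splits)
lemma M4_neg: "A \<in> M4 RS \<Longrightarrow> mneg A \<in> M4 RS"
  unfolding M4_def mneg_def by (auto simp: S_neg split: if_splits)

lemma foldr_S: "(\<And>k. k \<in> idx4 \<Longrightarrow> g k \<in> RS) \<Longrightarrow> foldr cadd (map g [1,2,3,4]) czero \<in> RS"
  unfolding foldr4 by (rule S_add, simp add: idx4_eq, rule S_add, simp add: idx4_eq, rule S_add; simp add: idx4_eq)

lemma mmul_entry: "i \<in> idx4 \<Longrightarrow> j \<in> idx4 \<Longrightarrow> (\<And>k. k \<in> idx4 \<Longrightarrow> cmul (A i k) (B k j) \<in> RS) \<Longrightarrow> mmul A B i j \<in> RS"
  unfolding mmul_def using foldr_S[of "\<lambda>k. cmul (A i k) (B k j)"] by simp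
lemma mmul_out: "\<not> (i \<in> idx4 \<and> j \<in> idx4) \<Longrightarrow> mmul A B i j = czero"
  unfolding mmul_def by (simp only: if_False simp_thms de_Morgan_conj) (metis (full_types))

lemma M4_in: "A \<in> M4 S \<Longrightarrow> i \<in> idx4 \<Longrightarrow> j \<in> idx4 \<Longrightarrow> A i j \<in> S"
  unfolding M4_def mem_Collect_eq by (drule spec[of _ i], drule spec[of _ j]) simp
lemma M4_I: "(\<And>i j. i \<in> idx4 \<Longrightarrow> j \<in> idx4 \<Longrightarrow> A i j \<in> S) \<Longrightarrow>
   (\<And>i j. \<not> (i \<in> idx4 \<and> j \<in> idx4) \<Longrightarrow> A i j = czero) \<Longrightarrow> A \<in> M4 S"
  unfolding M4_def by simp

lemma M4_mul: assumes "A \<in> M4 RS" "B \<in> M4 RS" shows "mmul A B \<in> M4 RS"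
proof (rule M4_I)
  fix i j assume "i \<in> idx4" "j \<in> idx4"
  then show "mmul A B i j \<in> RS"
    by (intro mmul_entry) (simp_all add: S_mul M4_in[OF assms(1)] M4_in[OF assms(2)])
qed (rule mmul_out)

lemma M4_gen: assumes "y \<in> octZ" "y' \<in> octZ"
  shows "mmul (iotaV (\<lambda>i. of_int (n i)) y) (iotaV (\<lambda>i. of_int (n' i)) y') \<in> M4 RS"
proof (rule M4_I)
  fix i j assume ij: "i \<in> idx4" "j \<in> idx4"
  have "cmul (iotaV (\<lambda>i. of_int (n i)) y i k) (iotaV (\<lambda>i. of_int (n' i)) y' k j) \<in> RS"
    if k: "k \<in> idx4" for k
  proof -
    obtain w where w: "w \<in> octZ" "iotaV (\<lambda>i. of_int (n i)) y i k = cvec w"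
      using iotaV_entry[OF assms(1) ij(1) k] by blast
    obtain w' where w': "w' \<in> octZ" "iotaV (\<lambda>i. of_int (n' i)) y' k j = cvec w'"
      using iotaV_entry[OF assms(2) k ij(2)] by blast
    show ?thesis unfolding w(2) w'(2) by (rule S_gen[OF w(1) w'(1)])
  qed
  then show "mmul (iotaV (\<lambda>i. of_int (n i)) y) (iotaV (\<lambda>i. of_int (n' i)) y') i j \<in> RS"
    using ij by (intro mmul_entry)
qed (rule mmul_out)

lemma incl1: "RM \<subseteq> M4 RS"
proof
  fix A assume "A \<in> RM"
  then show "A \<in> M4 RS" unfolding iota_Cplus_II_def
  proof (induction rule: ring_gen.induct)
    case (gen x)
    then obtain a b where x: "x = mmul (iotaV (fst a) (snd a)) (iotaV (fst b) (snd b))"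
      and "a \<in> II210" "b \<in> II210" by blast
    then obtain n y n' y' where "a = (\<lambda>i. of_int (n i), y)" "y \<in> octZ" "b = (\<lambda>i. of_int (n' i), y')" "y' \<in> octZ"
      unfolding II210_def by blast
    then show ?case using x M4_gen by simp
  qed (auto intro: M4_one M4_add M4_neg M4_mul)
qed




lemma gP_in: "gP a b \<in> RM"
proof -
  have "yv a \<in> octZ" "yv b \<in> octZ" unfolding yv_def by (rule e0vec_octZ)+
  then show ?thesis unfolding gP_def hvec_def by (rule R_gen)
qed

lemma mmul_single_left: assumes "i \<in> idx4" "k \<in> idx4"
  shows "mmul (single i k c) M = (\<lambda>r s. if r = i \<and> s \<in> idx4 then cmul c (M k s) else czero)"
  using assms unfolding mmul_def single_def foldr4 by (auto simp: fun_eq_iff idx4_eq)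

lemma mmul_single_right: assumes "j \<in> idx4" "k \<in> idx4"
  shows "mmul M (single k j c) = (\<lambda>r s. if r \<in> idx4 \<and> s = j then cmul (M r k) c else czero)"
  using assms unfolding mmul_def single_def foldr4 by (auto simp: fun_eq_iff idx4_eq)

lemma single_mul: assumes "i \<in> idx4" "k \<in> idx4" "j \<in> idx4"
  shows "mmul (single i k c) (single k j d) = single i j (cmul c d)"
  using assms by (simp add: mmul_single_left) (auto simp: fun_eq_iff single_def)

lemma E11: "single 1 1 cone \<in> RM"
proof -
  have "mmul (gP 1 2) (gP 3 4) = single 1 1 cone"
    unfolding gP_smat mmul_smat G1 G2 G3 G4
    by (rule smat_single) (simp_all add: idx4_eq hcoef_def)
  then show ?thesis using R_mul gP_in by metis
qed

lemma E12: "single 1 2 cone \<in> RM"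
proof -
  have "mmul (mmul (gP 1 2) (gP 3 4)) (gP 0 1) = single 1 2 cone"
    unfolding gP_smat mmul_smat G0 G1 G2 G3 G4
    by (rule smat_single) (simp_all add: idx4_eq hcoef_def dcoef_def)
  then show ?thesis using R_mul gP_in by metis
qed

lemma E14: "single 1 4 cone \<in> RM"
proof -
  have "mmul (mmul (gP 1 2) (gP 3 4)) (gP 0 3) = single 1 4 cone"
    unfolding gP_smat mmul_smat G0 G1 G2 G3 G4
    by (rule smat_single) (simp_all add: idx4_eq hcoef_def dcoef_def)
  then show ?thesis using R_mul gP_in by metis
qed

lemma E13: "single 1 3 cone \<in> RM"
proof -
  have "gP 1 3 = single 1 3 cone"
    unfolding gP_smat G1 G3
    by (rule smat_single) (simp_all add: idx4_eq hcoef_def)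
  then show ?thesis using gP_in by metis
qed

lemma E21: "single 2 1 cone \<in> RM"
proof -
  have "mmul (gP 0 2) (mmul (gP 1 2) (gP 3 4)) = single 2 1 cone"
    unfolding gP_smat mmul_smat G0 G1 G2 G3 G4
    by (rule smat_single) (simp_all add: idx4_eq hcoef_def dcoef_def)
  then show ?thesis using R_mul gP_in by metis
qed

lemma E41: "single 4 1 cone \<in> RM"
proof -
  have "mmul (gP 0 4) (mmul (gP 1 2) (gP 3 4)) = single 4 1 cone"
    unfolding gP_smat mmul_smat G0 G1 G2 G3 G4
    by (rule smat_single) (simp_all add: idx4_eq hcoef_def dcoef_def)
  then show ?thesis using R_mul gP_in by metis
qed

lemma E31: "single 3 1 cone \<in> RM"
proof -
  have "gP 4 2 = single 3 1 cone"
    unfolding gP_smat G4 G2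
    by (rule smat_single) (simp_all add: idx4_eq hcoef_def)
  then show ?thesis using gP_in by metis
qed

lemma cmul_cone_cone: "cmul cone cone = cone" using cmul_cs[of 1 1] by (simp add: cs1)

lemma Ei1: "i \<in> idx4 \<Longrightarrow> single i 1 cone \<in> RM"
  using E11 E21 E31 E41 by (auto simp: idx4_eq)
lemma E1j: "j \<in> idx4 \<Longrightarrow> single 1 j cone \<in> RM"
  using E11 E12 E13 E14 by (auto simp: idx4_eq)
lemma Eij: assumes "i \<in> idx4" "j \<in> idx4" shows "single i j cone \<in> RM"
proof -
  have "mmul (single i 1 cone) (single 1 j cone) = single i j cone"
    using assms by (simp add: single_mul idx4_eq cmul_cone_cone)
  then show ?thesis using R_mul Ei1[OF assms(1)] E1j[OF assms(2)] by metis
qed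




lemma cvec_split: "cadd (cscale (a 0) ce0) (cvec (a(0 := 0))) = cvec a"
  by (auto simp: cadd_def cscale_def ce0_def cvec_def fun_eq_iff)

lemma cscale0: "cscale 0 x = czero" by (simp add: cscale_def czero_def fun_eq_iff)

lemma iotaV0_2k: "k \<in> idx4 \<Longrightarrow> iotaV (\<lambda>i. 0) a 2 k = (if k = 2 then cvec a else czero)"
  by (auto simp: iotaV_def idx4_eq dcoef_def cvec_split cscale0)
lemma iotaV0_k2: "k \<in> idx4 \<Longrightarrow> iotaV (\<lambda>i. 0) a k 2 = (if k = 2 then cvec a else czero)"
  by (auto simp: iotaV_def idx4_eq dcoef_def cvec_split cscale0)

lemma N22: "mmul (iotaV (\<lambda>i. 0) a) (iotaV (\<lambda>i. 0) b) 2 2 = cmul (cvec a) (cvec b)"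
  unfolding mmul_def foldr4 by (simp add: idx4_eq iotaV0_2k iotaV0_k2)

lemma single_gen: assumes "a \<in> octZ" "b \<in> octZ" "i \<in> idx4" "j \<in> idx4"
  shows "single i j (cmul (cvec a) (cvec b)) \<in> RM"
proof -
  let ?N = "mmul (iotaV (\<lambda>i. 0) a) (iotaV (\<lambda>i. 0) b)"
  have N: "?N \<in> RM" using R_gen[OF assms(1,2), of "\<lambda>_. 0" "\<lambda>_. 0"] by simp
  have two: "(2::nat) \<in> idx4" by (simp add: idx4_eq)
  have "mmul (mmul (single i 2 cone) ?N) (single 2 j cone) = single i j (cmul (cvec a) (cvec b))"
    using assms two
    by (simp add: mmul_single_left mmul_single_right)
       (auto simp: single_def fun_eq_iff N22 cmul_cone_left cmul_cone_right supp_cmul)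
  moreover have "mmul (mmul (single i 2 cone) ?N) (single 2 j cone) \<in> RM"
    using R_mul Eij assms two N by metis
  ultimately show ?thesis by simp
qed

lemma single_in: assumes "c \<in> RS" shows "\<forall>i\<in>idx4. \<forall>j\<in>idx4. single i j c \<in> RM"
  using assms unfolding Cplus_octZ_def
proof (induction rule: ring_gen.induct)
  case (gen x)
  then show ?case using single_gen by blast
next
  case one
  then show ?case using Eij by blast
next
  case (add x y)
  have "single i j (cadd x y) = madd (single i j x) (single i j y)" for i j
    by (auto simp: single_def madd_def fun_eq_iff)
  then show ?case using add R_add by metis
next
  case (neg x)
  have "single i j (cneg x) = mneg (single i j x)" for i j
    by (auto simp: single_def mneg_def fun_eq_iff)
  then show ?case using neg R_neg by metis
next
  case (mul x y)
  have o: "(1::nat) \<in> idx4" by (simp add: idx4_eq)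
  have "single i j (cmul x y) = mmul (single i 1 x) (single 1 j y)" if "i \<in> idx4" "j \<in> idx4" for i j
    using that o by (simp add: single_mul)
  then show ?case using mul R_mul o by metis
qed

definition restr :: "(nat \<times> nat) set \<Rightarrow> mat \<Rightarrow> mat" where
  "restr F A = (\<lambda>r s. if (r, s) \<in> F then A r s else czero)"

lemma R_zero: "(\<lambda>r s. czero) \<in> RM"
proof -
  have "madd mone (mneg mone) = (\<lambda>r s. czero)" by (simp add: madd_def mneg_def cadd_cneg)
  then show ?thesis using R_add R_neg R_one by metis
qed

lemma restr_in: assumes "finite F" shows "F \<subseteq> idx4 \<times> idx4 \<Longrightarrow> (\<forall>p\<in>F. A (fst p) (snd p) \<in> RS) \<Longrightarrow> restr F A \<in> RM"
  using assms
proof (induction F rule: finite_induct)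
  case empty
  then show ?case using R_zero by (simp add: restr_def)
next
  case (insert p F)
  obtain i j where p: "p = (i, j)" by (cases p)
  have "restr (insert p F) A = madd (single i j (A i j)) (restr F A)"
    using insert(2) p by (auto simp: restr_def single_def madd_def fun_eq_iff)
  moreover have "single i j (A i j) \<in> RM" using single_in insert(4,5) p by auto
  moreover have "restr F A \<in> RM" using insert by auto
  ultimately show ?case using R_add by metis
qed

lemma incl2: "M4 RS \<subseteq> RM"
proof
  fix A assume A: "A \<in> M4 RS"
  have "A = restr (idx4 \<times> idx4) A" using A unfolding M4_def restr_def
    by (auto simp: fun_eq_iff)
  moreover have "restr (idx4 \<times> idx4) A \<in> RM"
    using A by (intro restr_in) (auto simp: M4_def idx4_eq)
  ultimately show "A \<in> RM" by simp
qed

theorem lemma5p1: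
  shows "iota_Cplus_II = M4 Cplus_octZ"
  using incl1 incl2 by blast


end
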